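(* Let $n \ge 2$, $G = Q_{4n}$, $k\ge0$, $n_1,m_1,\dots,n_k,m_k$ nonzero integers, and let $\lambda_R \in \mathbb{Z}C_{2n}$ be as defined below. Let $q: \mathbb{Z}C_{2n} \to \mathbb{Z}C_n$ be induced by the quotient $C_{2n} \to C_n$, and let $\bar{\cdot}$ be the involution of $\mathbb{Z}C_{2n}$ with $x^i \mapsto x^{-i}$. Then: (i) the equation $\alpha(xy - 1) + \beta\lambda_R = 1$ has a solution $\alpha, \beta \in \mathbb{Z}G$ if and only if $\delta q(\lambda_R) + \gamma q(\bar\lambda_R) = 1$ has a solution $\delta, \gamma \in \mathbb{Z}C_n$. More specifically, if $\widetilde\delta, \widetilde\gamma \in \mathbb{Z}C_{2n}$ lift such $\delta, \gamma$, then there exists $\varepsilon \in \mathbb{Z}C_{2n}$ with $\widetilde\delta\lambda_R + \widetilde\gamma\bar\lambda_R + \varepsilon(x^n - 1) = 1$, and one may take $\alpha = \varepsilon - \widetilde\gamma\bar\lambda_R + \varepsilon xy$, $\beta = \widetilde\delta + \widetilde\gamma xy$. (ii) If $\delta\lambda_R + \gamma\bar\lambda_R = 1$ for some $\delta, \gamma \in \mathbb{Z}C_{2n}$, then $\alpha = -\gamma\bar\lambda_R$, $\beta = \delta + \gamma xy$ solve $\alpha(xy-1) + \beta\lambda_R = 1$.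
   Context: $G = Q_{4n} = \langle x, y \mid x^n y^{-2}, xyxy^{-1} \rangle$ and $C_{2n} = \langle x \rangle \le G$ (so $\mathbb{Z}C_{2n} \subseteq \mathbb{Z}G$). With $n_{k+1} = 1-\sum_{i=1}^k n_i$, $m_{k+1} = 1-\sum_{i=1}^k m_i$, set $\lambda_R = \sum_{i=1}^{k+1} x^{\sum_{j=1}^{i-1}(n_j - m_j)} \sigma(n_i)$, where $\sigma(r) = 1 + x + \dots + x^{r-1}$ for $r>0$, $\sigma(0) = 0$, $\sigma(r) = -x^r(1 + \dots + x^{|r|-1})$ for $r<0$. *)

theory Defs
  imports "HOL-Algebra.Group"
begin

text \<open>An element of the integral group ring ZG of a finite group G is a function
  carrier G -> int (extended by 0 outside the carrier).\<close>

definition gr_elems :: "('a, 'b) monoid_scheme \<Rightarrow> ('a \<Rightarrow> int) set" where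
  "gr_elems G = {f. \<forall>z. z \<notin> carrier G \<longrightarrow> f z = 0}"

definition gr_add :: "('a \<Rightarrow> int) \<Rightarrow> ('a \<Rightarrow> int) \<Rightarrow> ('a \<Rightarrow> int)" where
  "gr_add f g = (\<lambda>z. f z + g z)"

definition gr_neg :: "('a \<Rightarrow> int) \<Rightarrow> ('a \<Rightarrow> int)" where
  "gr_neg f = (\<lambda>z. - f z)"

definition gr_sub :: "('a \<Rightarrow> int) \<Rightarrow> ('a \<Rightarrow> int) \<Rightarrow> ('a \<Rightarrow> int)" where
  "gr_sub f g = (\<lambda>z. f z - g z)"

definition gr_of :: "'a \<Rightarrow> ('a \<Rightarrow> int)" where
  "gr_of g = (\<lambda>z. if z = g then 1 else 0)"

definition gr_one :: "('a, 'b) monoid_scheme \<Rightarrow> ('a \<Rightarrow> int)" where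
  "gr_one G = gr_of \<one>\<^bsub>G\<^esub>"

definition gr_mul :: "('a, 'b) monoid_scheme \<Rightarrow> ('a \<Rightarrow> int) \<Rightarrow> ('a \<Rightarrow> int) \<Rightarrow> ('a \<Rightarrow> int)" where
  "gr_mul G f g = (\<lambda>z. \<Sum>(u, v) \<in> {(u, v). u \<in> carrier G \<and> v \<in> carrier G \<and> u \<otimes>\<^bsub>G\<^esub> v = z}. f u * g v)"

definition gr_map :: "('a, 'b) monoid_scheme \<Rightarrow> ('a \<Rightarrow> 'c) \<Rightarrow> ('a \<Rightarrow> int) \<Rightarrow> ('c \<Rightarrow> int)" where
  "gr_map G h f = (\<lambda>z. \<Sum>u \<in> {u \<in> carrier G. h u = z}. f u)"

text \<open>Cyclic group C_m = <x>, with x^i represented by i mod m, so x = 1.\<close>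
definition cyc :: "int \<Rightarrow> int monoid" where
  "cyc m = \<lparr>carrier = {0..<m}, mult = (\<lambda>a b. (a + b) mod m), one = 0\<rparr>"

definition cx :: "int \<Rightarrow> int \<Rightarrow> (int \<Rightarrow> int)" where
  "cx m e = gr_of (e mod m)"

text \<open>Quaternion group Q_{4n} = <x, y | x^n = y^2, x y x y^{-1} = 1>, with the element
  x^i y^j (0 <= i < 2n, j in {0,1}) represented by (i, j).  Relations used:
  y x^k = x^{-k} y and y^2 = x^n.\<close>
definition quat :: "int \<Rightarrow> (int \<times> int) monoid" where
  "quat n = \<lparr>carrier = {(i, j). 0 \<le> i \<and> i < 2 * n \<and> (j = 0 \<or> j = 1)},
     mult = (\<lambda>(i, j) (k, l).
        if j = 0 then ((i + k) mod (2 * n), l)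
        else if l = 0 then ((i - k) mod (2 * n), 1)
        else ((i - k + n) mod (2 * n), 0)),
     one = (0, 0)\<rparr>"

definition qx :: "int \<times> int" where "qx = (1, 0)"
definition qy :: "int \<times> int" where "qy = (0, 1)"

definition incl :: "int \<Rightarrow> (int \<Rightarrow> int) \<Rightarrow> (int \<times> int \<Rightarrow> int)" where
  "incl n f = gr_map (cyc (2 * n)) (\<lambda>i. (i, 0)) f"

definition qmap :: "int \<Rightarrow> (int \<Rightarrow> int) \<Rightarrow> (int \<Rightarrow> int)" where
  "qmap n f = gr_map (cyc (2 * n)) (\<lambda>i. i mod n) f"

definition cbar :: "int \<Rightarrow> (int \<Rightarrow> int) \<Rightarrow> (int \<Rightarrow> int)" where
  "cbar n f = gr_map (cyc (2 * n)) (\<lambda>i. (- i) mod (2 * n)) f"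

definition csigma :: "int \<Rightarrow> int \<Rightarrow> (int \<Rightarrow> int)" where
  "csigma m r =
    (if r > 0 then (\<lambda>z. \<Sum>t \<in> {0..<r}. cx m t z)
     else if r = 0 then (\<lambda>z. 0)
     else gr_neg (gr_mul (cyc m) (cx m r) (\<lambda>z. \<Sum>t \<in> {0..<\<bar>r\<bar>}. cx m t z)))"

text \<open>ns = [n_1,...,n_k], ms = [m_1,...,m_k]; n_{k+1} = 1 - sum ns, m_{k+1} = 1 - sum ms.
  lambda_R = sum_{i=1}^{k+1} x^{sum_{j<i} (n_j - m_j)} sigma(n_i) (written 0-indexed).\<close>
definition lambdaR :: "int \<Rightarrow> int list \<Rightarrow> int list \<Rightarrow> (int \<Rightarrow> int)" where
  "lambdaR n ns ms =
    (let N = ns @ [1 - sum_list ns]; M = ms @ [1 - sum_list ms]; m = 2 * n in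
     (\<lambda>z. \<Sum>i < length ns + 1.
        gr_mul (cyc m) (cx m (\<Sum>j < i. N ! j - M ! j)) (csigma m (N ! i)) z))"

end

theory Submission
  imports Defs "HOL-Algebra.Ring"
begin

lemma mod_iff_add:
  fixes m i k z :: int
  assumes "0 < m" "0 \<le> k" "k < m"
  shows "((i + k) mod m = z) = (0 \<le> z \<and> z < m \<and> k = (z - i) mod m)"
proof
  assume h: "(i + k) mod m = z"
  have "k = k mod m" using assms by simp
  also have "\<dots> = ((i + k) - i) mod m" by simp
  also have "\<dots> = ((i + k) mod m - i) mod m" by (simp add: mod_diff_left_eq)
  moreover have "0 \<le> z" "z < m" using h assms pos_mod_sign[of m "i+k"] pos_mod_bound[of m "i+k"] by auto
  ultimately show "0 \<le> z \<and> z < m \<and> k = (z - i) mod m" using h by auto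
next
  assume "0 \<le> z \<and> z < m \<and> k = (z - i) mod m"
  then show "(i + k) mod m = z" by (simp add: mod_add_right_eq)
qed

lemma mod_iff_sub:
  fixes m i k z :: int
  assumes "0 < m" "0 \<le> k" "k < m"
  shows "((i - k) mod m = z) = (0 \<le> z \<and> z < m \<and> k = (i - z) mod m)"
proof
  assume h: "(i - k) mod m = z"
  have "k = k mod m" using assms by simp
  also have "\<dots> = (i - (i - k)) mod m" by simp
  also have "\<dots> = (i - (i - k) mod m) mod m" by (simp add: mod_diff_right_eq)
  moreover have "0 \<le> z" "z < m" using h assms pos_mod_sign[of m "i-k"] pos_mod_bound[of m "i-k"] by auto
  ultimately show "0 \<le> z \<and> z < m \<and> k = (i - z) mod m" using h by auto
next
  assume "0 \<le> z \<and> z < m \<and> k = (i - z) mod m"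
  then show "(i - k) mod m = z" by (simp add: mod_diff_right_eq)
qed

lemma collapse_add:
  fixes m i z :: int
  assumes "0 < m"
  shows "(\<Sum>k\<in>{0..<m}. if (i + k) mod m = z then F k else 0) =
         (if 0 \<le> z \<and> z < m then F ((z - i) mod m) else 0)"
proof -
  have "(\<Sum>k\<in>{0..<m}. if (i + k) mod m = z then F k else 0) =
        (\<Sum>k\<in>{0..<m}. if 0 \<le> z \<and> z < m \<and> k = (z - i) mod m then F k else 0)"
    by (rule sum.cong) (use assms mod_iff_add in auto)
  also have "\<dots> = (if 0 \<le> z \<and> z < m then F ((z - i) mod m) else 0)"
    using assms by (auto simp: sum.delta')
  finally show ?thesis .
qed

lemma collapse_sub:
  fixes m i z :: int
  assumes "0 < m"
  shows "(\<Sum>k\<in>{0..<m}. if (i - k) mod m = z then F k else 0) =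
         (if 0 \<le> z \<and> z < m then F ((i - z) mod m) else 0)"
proof -
  have "(\<Sum>k\<in>{0..<m}. if (i - k) mod m = z then F k else 0) =
        (\<Sum>k\<in>{0..<m}. if 0 \<le> z \<and> z < m \<and> k = (i - z) mod m then F k else 0)"
    by (rule sum.cong) (use assms mod_iff_sub in auto)
  also have "\<dots> = (if 0 \<le> z \<and> z < m then F ((i - z) mod m) else 0)"
    using assms by (auto simp: sum.delta')
  finally show ?thesis .
qed

lemma collapse_sub2:
  fixes m i z c :: int
  assumes "0 < m"
  shows "(\<Sum>k\<in>{0..<m}. if (i - k + c) mod m = z then F k else 0) =
         (if 0 \<le> z \<and> z < m then F ((i + c - z) mod m) else 0)"
  using collapse_sub[OF assms, of "i + c" z F] by (simp add: algebra_simps)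

lemma gr_mul_ind:
  assumes "finite (carrier G)"
  shows "gr_mul G f g w = (\<Sum>u\<in>carrier G. \<Sum>v\<in>carrier G. if u \<otimes>\<^bsub>G\<^esub> v = w then f u * g v else 0)"
proof -
  have "{(u, v). u \<in> carrier G \<and> v \<in> carrier G \<and> u \<otimes>\<^bsub>G\<^esub> v = w}
        = {p \<in> carrier G \<times> carrier G. fst p \<otimes>\<^bsub>G\<^esub> snd p = w}" by auto
  then have "gr_mul G f g w = (\<Sum>p\<in>carrier G \<times> carrier G. if fst p \<otimes>\<^bsub>G\<^esub> snd p = w then f (fst p) * g (snd p) else 0)"
    unfolding gr_mul_def using assms by (simp add: sum.inter_filter case_prod_beta)
  also have "\<dots> = (\<Sum>u\<in>carrier G. \<Sum>v\<in>carrier G. if u \<otimes>\<^bsub>G\<^esub> v = w then f u * g v else 0)"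
    by (simp add: sum.cartesian_product case_prod_beta)
  finally show ?thesis .
qed

lemma cyc_carrier[simp]: "carrier (cyc m) = {0..<m}" by (simp add: cyc_def)
lemma cyc_mult[simp]: "mult (cyc m) a b = (a + b) mod m" by (simp add: cyc_def)
lemma cyc_one[simp]: "one (cyc m) = 0" by (simp add: cyc_def)

lemma mulf:
  fixes m :: int assumes "0 < m"
  shows "gr_mul (cyc m) f g z = (if 0 \<le> z \<and> z < m then (\<Sum>u\<in>{0..<m}. f u * g ((z - u) mod m)) else 0)"
  using assms by (cases "0 \<le> z \<and> z < m") (auto simp: gr_mul_ind collapse_add)


lemma sum_shift:
  fixes m u :: int assumes "0 < m"
  shows "(\<Sum>v\<in>{0..<m}. F v) = (\<Sum>w\<in>{0..<m}. F ((w + u) mod m))"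
  by (rule sum.reindex_bij_witness[of _ "\<lambda>w. (w + u) mod m" "\<lambda>v. (v - u) mod m"])
     (use assms in \<open>auto simp: mod_simps\<close>)

lemma sum_refl:
  fixes m z :: int assumes "0 < m"
  shows "(\<Sum>v\<in>{0..<m}. F v) = (\<Sum>w\<in>{0..<m}. F ((z - w) mod m))"
  by (rule sum.reindex_bij_witness[of _ "\<lambda>w. (z - w) mod m" "\<lambda>v. (z - v) mod m"])
     (use assms in \<open>auto simp: mod_simps\<close>)

lemma cmul_comm:
  fixes m :: int assumes "0 < m"
  shows "gr_mul (cyc m) f g = gr_mul (cyc m) g f"
proof (rule ext)
  fix z
  show "gr_mul (cyc m) f g z = gr_mul (cyc m) g f z"
  proof (cases "0 \<le> z \<and> z < m")
    case True
    have "(\<Sum>u\<in>{0..<m}. f u * g ((z - u) mod m)) = (\<Sum>w\<in>{0..<m}. f ((z - w) mod m) * g ((z - (z - w) mod m) mod m))"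
      by (rule sum_refl[OF assms])
    also have "\<dots> = (\<Sum>w\<in>{0..<m}. g w * f ((z - w) mod m))"
      by (rule sum.cong) (auto simp: mod_simps)
    finally show ?thesis using True assms by (simp add: mulf)
  qed (use assms in \<open>auto simp: mulf\<close>)
qed

lemma cmul_closed:
  fixes m :: int assumes "0 < m"
  shows "gr_mul (cyc m) f g \<in> gr_elems (cyc m)"
  using assms by (auto simp: gr_elems_def mulf)

lemma cmul_assoc:
  fixes m :: int assumes m: "0 < m"
  shows "gr_mul (cyc m) (gr_mul (cyc m) f g) h = gr_mul (cyc m) f (gr_mul (cyc m) g h)"
proof (rule ext)
  fix z
  show "gr_mul (cyc m) (gr_mul (cyc m) f g) h z = gr_mul (cyc m) f (gr_mul (cyc m) g h) z"
  proof (cases "0 \<le> z \<and> z < m")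
    case True
    have inner: "(\<Sum>v\<in>{0..<m}. g ((v - u) mod m) * h ((z - v) mod m)) =
        (\<Sum>w\<in>{0..<m}. g w * h (((z - u) mod m - w) mod m))" for u
    proof -
      have "(\<Sum>v\<in>{0..<m}. g ((v - u) mod m) * h ((z - v) mod m)) =
        (\<Sum>w\<in>{0..<m}. g (((w + u) mod m - u) mod m) * h ((z - (w + u) mod m) mod m))"
        by (rule sum_shift[OF m])
      also have "\<dots> = (\<Sum>w\<in>{0..<m}. g w * h (((z - u) mod m - w) mod m))"
        by (rule sum.cong) (auto simp: mod_simps algebra_simps)
      finally show ?thesis .
    qed
    have "gr_mul (cyc m) (gr_mul (cyc m) f g) h z =
       (\<Sum>v\<in>{0..<m}. (\<Sum>u\<in>{0..<m}. f u * g ((v - u) mod m)) * h ((z - v) mod m))"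
      using True m by (simp add: mulf)
    also have "\<dots> = (\<Sum>v\<in>{0..<m}. \<Sum>u\<in>{0..<m}. f u * (g ((v - u) mod m) * h ((z - v) mod m)))"
      by (simp add: sum_distrib_right mult.assoc)
    also have "\<dots> = (\<Sum>u\<in>{0..<m}. f u * (\<Sum>v\<in>{0..<m}. g ((v - u) mod m) * h ((z - v) mod m)))"
      by (subst sum.swap) (simp add: sum_distrib_left)
    also have "\<dots> = (\<Sum>u\<in>{0..<m}. f u * (\<Sum>w\<in>{0..<m}. g w * h (((z - u) mod m - w) mod m)))"
      by (simp add: inner)
    also have "\<dots> = gr_mul (cyc m) f (gr_mul (cyc m) g h) z"
      using True m by (simp add: mulf)
    finally show ?thesis .
  qed (use m in \<open>auto simp: mulf\<close>)
qed

lemma cmul_distrib: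
  "gr_mul G f (gr_add g h) = gr_add (gr_mul G f g) (gr_mul G f h)"
  unfolding gr_mul_def gr_add_def by (simp add: sum.distrib distrib_left case_prod_beta)

lemma gr_one_cyc: "gr_one (cyc m) = gr_of 0" by (simp add: gr_one_def)

lemma cone_mul:
  fixes m :: int assumes m: "0 < m" and f: "f \<in> gr_elems (cyc m)"
  shows "gr_mul (cyc m) (gr_one (cyc m)) f = f"
proof (rule ext)
  fix z show "gr_mul (cyc m) (gr_one (cyc m)) f z = f z"
  proof (cases "0 \<le> z \<and> z < m")
    case True
    have "(\<Sum>u\<in>{0..<m}. gr_of 0 u * f ((z-u) mod m)) = (\<Sum>u\<in>{0..<m}. if u = 0 then f ((z-u) mod m) else 0)"
      by (rule sum.cong) (auto simp: gr_of_def)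
    then show ?thesis using True m by (simp add: mulf gr_one_cyc)
  qed (use m f in \<open>auto simp: mulf gr_elems_def\<close>)
qed

lemma cmul_cx:
  fixes m c :: int assumes m: "0 < m"
  shows "gr_mul (cyc m) f (cx m c) z = (if 0 \<le> z \<and> z < m then f ((z - c) mod m) else 0)"
proof (cases "0 \<le> z \<and> z < m")
  case True
  have "(\<Sum>u\<in>{0..<m}. f u * cx m c ((z - u) mod m)) = (\<Sum>u\<in>{0..<m}. if (z - u) mod m = c mod m then f u else 0)"
    by (rule sum.cong) (auto simp: cx_def gr_of_def)
  also have "\<dots> = (\<Sum>u\<in>{0..<m}. if u = (z - c mod m) mod m then f u else 0)"
    by (rule sum.cong) (use m mod_iff_sub in auto)
  also have "\<dots> = f ((z - c) mod m)" using m by (simp add: mod_diff_right_eq)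
  finally show ?thesis using True m by (simp add: mulf)
qed (use m in \<open>auto simp: mulf\<close>)

lemma cx_cx:
  fixes m a b :: int assumes m: "0 < m"
  shows "gr_mul (cyc m) (cx m a) (cx m b) = cx m (a + b)"
proof (rule ext)
  fix z
  show "gr_mul (cyc m) (cx m a) (cx m b) z = cx m (a + b) z"
  proof (cases "0 \<le> z \<and> z < m")
    case True
    have "((z - b) mod m = a mod m) = (z = (a + b) mod m)"
    proof
      assume h: "(z - b) mod m = a mod m"
      have "z = z mod m" using True by simp
      also have "\<dots> = ((z - b) mod m + b) mod m" by (simp add: mod_simps)
      also have "\<dots> = (a + b) mod m" by (simp add: h mod_simps)
      finally show "z = (a + b) mod m" .
    next
      assume "z = (a + b) mod m"
      then show "(z - b) mod m = a mod m" by (simp add: mod_simps)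
    qed
    then show ?thesis using True m by (subst cmul_cx[OF m]) (simp add: cx_def gr_of_def)
  next
    case False
    then show ?thesis using m by (subst cmul_cx[OF m]) (auto simp: cx_def gr_of_def)
  qed
qed


lemma gr_one_cx: "gr_one (cyc m) = cx m 0" by (simp add: gr_one_def cx_def)

lemma cmul_sub:
  "gr_mul G f (gr_sub g h) = gr_sub (gr_mul G f g) (gr_mul G f h)"
  unfolding gr_mul_def gr_sub_def by (simp add: sum_subtractf right_diff_distrib case_prod_beta)

definition Rg :: "int \<Rightarrow> (int \<Rightarrow> int) ring" where
  "Rg m = \<lparr>carrier = gr_elems (cyc m), mult = gr_mul (cyc m), one = gr_one (cyc m),
           zero = (\<lambda>_. 0), add = gr_add\<rparr>"

lemma Rg_simps:
  "carrier (Rg m) = gr_elems (cyc m)" "mult (Rg m) = gr_mul (cyc m)" "one (Rg m) = gr_one (cyc m)"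
  "zero (Rg m) = (\<lambda>_. 0)" "add (Rg m) = gr_add"
  by (simp_all add: Rg_def)

lemma gr_elems_cyc: "f \<in> gr_elems (cyc m) \<longleftrightarrow> (\<forall>z. \<not> (0 \<le> z \<and> z < m) \<longrightarrow> f z = 0)"
  by (auto simp: gr_elems_def)

lemma cring_Rg:
  fixes m :: int assumes m: "0 < m"
  shows "cring (Rg m)"
proof (rule cringI)
  show "abelian_group (Rg m)"
  proof (rule abelian_groupI)
    fix x assume x: "x \<in> carrier (Rg m)"
    show "\<exists>y\<in>carrier (Rg m). y \<oplus>\<^bsub>Rg m\<^esub> x = \<zero>\<^bsub>Rg m\<^esub>"
      by (rule bexI[of _ "gr_neg x"]) (use x in \<open>auto simp: gr_elems_cyc gr_neg_def gr_add_def Rg_simps\<close>)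
  qed (auto simp: gr_elems_cyc gr_add_def Rg_simps)
  show "Group.comm_monoid (Rg m)"
  proof (rule comm_monoidI)
    show "\<one>\<^bsub>Rg m\<^esub> \<in> carrier (Rg m)" using m by (auto simp: gr_elems_cyc gr_one_cyc gr_of_def Rg_simps)
  qed (use m in \<open>auto simp: cmul_closed cmul_assoc cone_mul Rg_simps intro: cmul_comm\<close>)
  fix x y z assume "x \<in> carrier (Rg m)" "y \<in> carrier (Rg m)" "z \<in> carrier (Rg m)"
  show "(x \<oplus>\<^bsub>Rg m\<^esub> y) \<otimes>\<^bsub>Rg m\<^esub> z = x \<otimes>\<^bsub>Rg m\<^esub> z \<oplus>\<^bsub>Rg m\<^esub> y \<otimes>\<^bsub>Rg m\<^esub> z"
    using cmul_distrib[of "cyc m" z x y] by (simp add: cmul_comm[OF m] Rg_simps)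
qed

lemma Rg_neg:
  fixes m :: int assumes m: "0 < m" and x: "x \<in> gr_elems (cyc m)"
  shows "\<ominus>\<^bsub>Rg m\<^esub> x = gr_neg x"
proof -
  interpret R: cring "Rg m" by (rule cring_Rg[OF m])
  show ?thesis
    by (rule R.minus_equality) (use x in \<open>auto simp: gr_elems_cyc gr_neg_def gr_add_def Rg_simps\<close>)
qed

lemma Rg_sub:
  fixes m :: int assumes m: "0 < m" and x: "x \<in> gr_elems (cyc m)" and y: "y \<in> gr_elems (cyc m)"
  shows "x \<ominus>\<^bsub>Rg m\<^esub> y = gr_sub x y"
  using Rg_neg[OF m y] by (simp add: a_minus_def gr_add_def gr_neg_def gr_sub_def Rg_simps)

lemma cbar_f:
  fixes n :: int assumes n: "0 < n"
  shows "cbar n f k = (if 0 \<le> k \<and> k < 2 * n then f ((- k) mod (2 * n)) else 0)"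
proof -
  have m: "0 < 2 * n" using n by simp
  have "cbar n f k = (\<Sum>u\<in>{0..<2*n}. if (0 - u) mod (2 * n) = k then f u else 0)"
    unfolding cbar_def gr_map_def
    by (subst sum.inter_filter[symmetric]) (auto intro: sum.cong)
  also have "\<dots> = (if 0 \<le> k \<and> k < 2 * n then f ((0 - k) mod (2 * n)) else 0)"
    by (rule collapse_sub[OF m])
  finally show ?thesis by simp
qed

lemma cbar_closed: "0 < n \<Longrightarrow> cbar n f \<in> gr_elems (cyc (2 * n))"
  by (simp add: gr_elems_cyc cbar_f)

lemma cbar_cx:
  fixes n k :: int assumes n: "0 < n"
  shows "cbar n (cx (2 * n) k) = cx (2 * n) (- k)"
proof (rule ext)
  fix j
  have m: "0 < 2 * n" using n by simp
  show "cbar n (cx (2 * n) k) j = cx (2 * n) (- k) j"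
  proof (cases "0 \<le> j \<and> j < 2 * n")
    case True
    have "((- j) mod (2 * n) = k mod (2 * n)) = (j = (- k) mod (2 * n))"
      using mod_iff_sub[OF m, of j 0 "k mod (2*n)"] True m by (auto simp: mod_simps)
    then show ?thesis using True n by (simp add: cbar_f cx_def gr_of_def)
  next
    case False
    then show ?thesis using n m by (auto simp: cbar_f cx_def gr_of_def)
  qed
qed

lemma cbar_zero: "cbar n (\<lambda>_. 0) = (\<lambda>_. 0)"
  by (simp add: cbar_def gr_map_def)

lemma cbar_neg: "cbar n (gr_neg f) = gr_neg (cbar n f)"
  by (simp add: cbar_def gr_map_def gr_neg_def sum_negf)


lemma mod_small2:
  fixes u n :: int assumes "0 < n" "0 \<le> u" "u < 2 * n"
  shows "u mod n = (if u < n then u else u - n)"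
proof (cases "u < n")
  case False
  have "u mod n = (u - n + n) mod n" by simp
  also have "\<dots> = (u - n) mod n" by (simp add: mod_simps)
  also have "\<dots> = u - n" by (rule mod_pos_pos_trivial) (use False assms in auto)
  finally show ?thesis using False by simp
qed (use assms in simp)

lemma qmap_f:
  fixes n :: int assumes n: "0 < n"
  shows "qmap n f z = (if 0 \<le> z \<and> z < n then f z + f (z + n) else 0)"
proof -
  have S: "{u \<in> carrier (cyc (2 * n)). u mod n = z} = (if 0 \<le> z \<and> z < n then {z, z + n} else {})"
    using n by (auto simp: mod_small2 split: if_splits)
  show ?thesis unfolding qmap_def gr_map_def S using n by auto
qed

lemma qmap_closed: "0 < n \<Longrightarrow> qmap n f \<in> gr_elems (cyc n)"
  by (simp add: gr_elems_cyc qmap_f)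

lemma qmap_add: "qmap n (gr_add f g) = gr_add (qmap n f) (qmap n g)"
  by (simp add: qmap_def gr_map_def gr_add_def sum.distrib)

lemma qmap_neg: "qmap n (gr_neg f) = gr_neg (qmap n f)"
  by (simp add: qmap_def gr_map_def gr_neg_def sum_negf)

lemma qmap_sub: "qmap n (gr_sub f g) = gr_sub (qmap n f) (qmap n g)"
  by (simp add: qmap_def gr_map_def gr_sub_def sum_subtractf)

lemma qmap_cx:
  fixes n k :: int assumes n: "0 < n"
  shows "qmap n (cx (2 * n) k) = cx n k"
proof (rule ext)
  fix z
  have "(z = k mod (2 * n) \<or> z + n = k mod (2 * n)) = (z = k mod n)" if "0 \<le> z" "z < n"
  proof -
    have a: "k mod (2 * n) mod n = k mod n"
      by (simp add: mod_mod_cancel)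
    have b: "0 \<le> k mod (2 * n)" "k mod (2 * n) < 2 * n" using n by auto
    have c: "k mod n < n" using n by simp
    show ?thesis
    proof (cases "k mod (2 * n) < n")
      case True
      then show ?thesis using mod_small2[OF n b] a c that by auto
    next
      case False
      then show ?thesis using mod_small2[OF n b] a c that by auto
    qed
  qed
  moreover have "0 \<le> k mod n" "k mod n < n" using n by auto
  ultimately show "qmap n (cx (2 * n) k) z = cx n k z"
    using n by (auto simp: qmap_f cx_def gr_of_def)
qed

lemma sum_split2:
  fixes n :: int assumes n: "0 < n"
  shows "(\<Sum>u\<in>{0..<2*n}. F u) = (\<Sum>a\<in>{0..<n}. F a + F (a + n))"
proof -
  have "{0..<2*n} = {0..<n} \<union> (\<lambda>a. a + n) ` {0..<n}"
  proof (rule equalityI; rule subsetI)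
    fix u assume "u \<in> {0..<2*n}"
    then show "u \<in> {0..<n} \<union> (\<lambda>a. a + n) ` {0..<n}"
    proof (cases "u < n")
      case False
      then have "u - n \<in> {0..<n}" "u = (u - n) + n" using \<open>u \<in> {0..<2*n}\<close> by auto
      then show ?thesis by blast
    qed auto
  next
    fix u assume "u \<in> {0..<n} \<union> (\<lambda>a. a + n) ` {0..<n}"
    then show "u \<in> {0..<2*n}" using n by auto
  qed
  moreover have "{0..<n} \<inter> (\<lambda>a. a + n) ` {0..<n} = {}" by auto
  ultimately have "(\<Sum>u\<in>{0..<2*n}. F u) = (\<Sum>a\<in>{0..<n}. F a) + (\<Sum>u\<in>(\<lambda>a. a + n) ` {0..<n}. F u)"
    by (simp add: sum.union_disjoint)
  also have "(\<Sum>u\<in>(\<lambda>a. a + n) ` {0..<n}. F u) = (\<Sum>a\<in>{0..<n}. F (a + n))"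
    by (subst sum.reindex) (auto simp: inj_on_def)
  finally show ?thesis by (simp add: sum.distrib)
qed

lemma pairsum:
  fixes n t :: int and g :: "int \<Rightarrow> int" assumes n: "0 < n"
  shows "g (t mod (2 * n)) + g ((t + n) mod (2 * n)) = g (t mod n) + g (t mod n + n)"
proof -
  define s where "s = t mod (2 * n)"
  have s: "0 \<le> s" "s < 2 * n" using n by (auto simp: s_def)
  have tn: "t mod n = s mod n" by (simp add: s_def mod_mod_cancel)
  have tn2: "(t + n) mod (2 * n) = (s + n) mod (2 * n)" by (simp add: s_def mod_add_left_eq)
  show ?thesis
  proof (cases "s < n")
    case True
    have e1: "(s + n) mod (2 * n) = s + n" by (rule mod_pos_pos_trivial) (use True s in auto)
    have e2: "s mod n = s" by (rule mod_pos_pos_trivial) (use True s in auto)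
    show ?thesis unfolding tn tn2 e1 e2 s_def[symmetric] ..
  next
    case False
    have "(s + n) mod (2 * n) = (s - n + 2 * n) mod (2 * n)"
      by (rule arg_cong[where f="\<lambda>x. x mod (2 * n)"]) simp
    also have "\<dots> = (s - n) mod (2 * n)" by (rule mod_add_self2)
    also have "\<dots> = s - n" by (rule mod_pos_pos_trivial) (use False s n in auto)
    finally have e1: "(s + n) mod (2 * n) = s - n" .
    have e2: "t mod n = s - n" using tn mod_small2[OF n s] False by simp
    have "g (t mod (2*n)) = g s" by (simp add: s_def)
    moreover have "s - n + n = s" by simp
    ultimately show ?thesis unfolding tn2 e1 e2
      by (simp add: add.commute)
  qed
qed


lemma qmap_mul:
  fixes n :: int assumes n: "0 < n"
  shows "qmap n (gr_mul (cyc (2 * n)) f g) = gr_mul (cyc n) (qmap n f) (qmap n g)"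
proof (rule ext)
  fix z
  have m: "0 < 2 * n" using n by simp
  define Q where "Q b = g b + g (b + n)" for b
  show "qmap n (gr_mul (cyc (2 * n)) f g) z = gr_mul (cyc n) (qmap n f) (qmap n g) z"
  proof (cases "0 \<le> z \<and> z < n")
    case True
    have "qmap n (gr_mul (cyc (2 * n)) f g) z =
      (\<Sum>u\<in>{0..<2*n}. f u * g ((z - u) mod (2*n))) + (\<Sum>u\<in>{0..<2*n}. f u * g ((z + n - u) mod (2*n)))"
      using True n m by (simp add: qmap_f mulf)
    also have "\<dots> = (\<Sum>u\<in>{0..<2*n}. f u * (g ((z - u) mod (2*n)) + g ((z - u + n) mod (2*n))))"
      by (simp add: sum.distrib[symmetric] distrib_left algebra_simps)
    also have "\<dots> = (\<Sum>u\<in>{0..<2*n}. f u * Q ((z - u) mod n))"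
      by (simp add: pairsum[OF n] Q_def)
    also have "\<dots> = (\<Sum>a\<in>{0..<n}. f a * Q ((z - a) mod n) + f (a + n) * Q ((z - (a + n)) mod n))"
      by (rule sum_split2[OF n])
    also have "\<dots> = (\<Sum>a\<in>{0..<n}. (f a + f (a + n)) * Q ((z - a) mod n))"
    proof (rule sum.cong)
      fix a
      have "(z - (a + n)) mod n = ((z - a) + (-1) * n) mod n" by (simp add: algebra_simps)
      then have "(z - (a + n)) mod n = (z - a) mod n" by (simp only: mod_mult_self1)
      then show "f a * Q ((z - a) mod n) + f (a + n) * Q ((z - (a + n)) mod n) = (f a + f (a + n)) * Q ((z - a) mod n)"
        by (simp add: distrib_right)
    qed simp
    also have "\<dots> = gr_mul (cyc n) (qmap n f) (qmap n g) z"
      using True n by (simp add: mulf qmap_f Q_def)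
    finally show ?thesis .
  qed (use n in \<open>auto simp: qmap_f mulf\<close>)
qed

lemma qmap_one:
  fixes n :: int assumes n: "0 < n"
  shows "qmap n (gr_one (cyc (2 * n))) = gr_one (cyc n)"
  using qmap_cx[OF n, of 0] by (simp add: gr_one_cx)

lemma qmap_Xn:
  fixes n :: int assumes n: "0 < n"
  shows "qmap n (cx (2 * n) n) = gr_one (cyc n)"
  using qmap_cx[OF n, of n] by (simp add: gr_one_cx cx_def)

definition lift :: "int \<Rightarrow> (int \<Rightarrow> int) \<Rightarrow> (int \<Rightarrow> int)" where
  "lift n d = (\<lambda>i. if 0 \<le> i \<and> i < n then d i else 0)"

lemma lift_closed: "0 < n \<Longrightarrow> lift n d \<in> gr_elems (cyc (2 * n))"
  by (simp add: gr_elems_cyc lift_def)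

lemma qmap_lift:
  fixes n :: int assumes n: "0 < n" and d: "d \<in> gr_elems (cyc n)"
  shows "qmap n (lift n d) = d"
  using n d by (auto simp: qmap_f lift_def gr_elems_cyc)

lemma kernel:
  fixes n :: int assumes n: "0 < n" and h: "h \<in> gr_elems (cyc (2 * n))"
    and q: "qmap n h = (\<lambda>_. 0)"
  shows "gr_mul (cyc (2 * n)) (lift n h) (gr_sub (gr_one (cyc (2 * n))) (cx (2 * n) n)) = h"
proof (rule ext)
  fix z
  have m: "0 < 2 * n" using n by simp
  have e: "gr_mul (cyc (2 * n)) (lift n h) (gr_one (cyc (2 * n))) = lift n h"
    using cone_mul[OF m lift_closed[OF n]] cmul_comm[OF m] by metis
  have qz: "h z + h (z + n) = 0" if "0 \<le> z" "z < n" for z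
    using fun_cong[OF q, of z] that n by (simp add: qmap_f)
  show "gr_mul (cyc (2 * n)) (lift n h) (gr_sub (gr_one (cyc (2 * n))) (cx (2 * n) n)) z = h z"
  proof -
    have "gr_mul (cyc (2 * n)) (lift n h) (gr_sub (gr_one (cyc (2 * n))) (cx (2 * n) n)) z
       = lift n h z - (if 0 \<le> z \<and> z < 2 * n then lift n h ((z - n) mod (2 * n)) else 0)"
      using m by (simp only: cmul_sub e) (simp add: gr_sub_def cmul_cx[OF m])
    also have "\<dots> = h z"
    proof (cases "0 \<le> z \<and> z < n")
      case True
      have "(z - n) mod (2 * n) = z + n"
      proof -
        have "(z - n) mod (2 * n) = (z + n + (-1) * (2 * n)) mod (2 * n)" by (simp add: algebra_simps)
        also have "\<dots> = (z + n) mod (2 * n)" by (rule mod_mult_self1)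
        also have "\<dots> = z + n" by (rule mod_pos_pos_trivial) (use True in auto)
        finally show ?thesis .
      qed
      then show ?thesis using True by (simp add: lift_def)
    next
      case False
      show ?thesis
      proof (cases "n \<le> z \<and> z < 2 * n")
        case True
        have "(z - n) mod (2 * n) = z - n" by (rule mod_pos_pos_trivial) (use True in auto)
        then show ?thesis using True qz[of "z - n"] n by (simp add: lift_def)
      next
        case False2: False
        then show ?thesis using False h n by (auto simp: lift_def gr_elems_cyc)
      qed
    qed
    finally show ?thesis .
  qed
qed


definition pr :: "(int \<Rightarrow> int) \<Rightarrow> (int \<Rightarrow> int) \<Rightarrow> (int \<times> int \<Rightarrow> int)" where
  "pr a b = (\<lambda>(i, j). if j = 0 then a i else if j = 1 then b i else 0)"

lemma pr_0[simp]: "pr a b (i, 0) = a i" and pr_1[simp]: "pr a b (i, 1) = b i"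
  by (simp_all add: pr_def)

lemma quat_carrier: "carrier (quat n) = {(i, j). 0 \<le> i \<and> i < 2 * n \<and> (j = 0 \<or> j = 1)}"
  by (simp add: quat_def)

lemma quat_mult:
  "(i, j) \<otimes>\<^bsub>quat n\<^esub> (k, l) = (if j = 0 then ((i + k) mod (2 * n), l)
        else if l = 0 then ((i - k) mod (2 * n), 1) else ((i - k + n) mod (2 * n), 0))"
  by (simp add: quat_def)

lemma quat_carrier2: "carrier (quat n) = {0..<2*n} \<times> {0, 1}"
  by (auto simp: quat_carrier)

lemma sumG: "(\<Sum>u\<in>carrier (quat n). F u) = (\<Sum>i\<in>{0..<2*n}. F (i, 0) + F (i, 1))"
proof -
  have "(\<Sum>u\<in>{0..<2*n} \<times> {0::int, 1}. F u) = (\<Sum>i\<in>{0..<2*n}. \<Sum>j\<in>{0::int, 1}. F (i, j))"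
    by (subst sum.cartesian_product) simp
  then show ?thesis by (simp add: quat_carrier2)
qed

lemma quat_closed:
  assumes "n > 0" "u \<in> carrier (quat n)" "v \<in> carrier (quat n)"
  shows "u \<otimes>\<^bsub>quat n\<^esub> v \<in> carrier (quat n)"
  using assms by (cases u; cases v) (auto simp: quat_carrier quat_mult)

lemma quat_out:
  assumes "n > 0" "w \<notin> carrier (quat n)"
  shows "gr_mul (quat n) f g w = 0"
proof -
  have S: "{(u, v). u \<in> carrier (quat n) \<and> v \<in> carrier (quat n) \<and> u \<otimes>\<^bsub>quat n\<^esub> v = w} = {}"
    using quat_closed[OF assms(1)] assms(2) by blast
  show ?thesis unfolding gr_mul_def by (simp only: S sum.empty)
qed

lemma RX:
  fixes n :: int assumes n: "0 < n" and z: "0 \<le> z" "z < 2 * n"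
  shows "gr_mul (cyc (2 * n)) (cx (2 * n) n) h z = h ((z - n) mod (2 * n))"
  using n z cmul_cx[of "2*n" h n z] cmul_comm[of "2*n" h "cx (2*n) n"] by simp

lemma Rbar:
  fixes n :: int assumes n: "0 < n" and z: "0 \<le> z" "z < 2 * n"
  shows "gr_mul (cyc (2 * n)) a (cbar n b) z = (\<Sum>i\<in>{0..<2*n}. a i * b ((i - z) mod (2 * n)))"
proof -
  have "gr_mul (cyc (2 * n)) a (cbar n b) z = (\<Sum>i\<in>{0..<2*n}. a i * cbar n b ((z - i) mod (2 * n)))"
    using n z by (simp add: mulf)
  also have "\<dots> = (\<Sum>i\<in>{0..<2*n}. a i * b ((i - z) mod (2 * n)))"
    using n by (intro sum.cong) (auto simp: cbar_f mod_simps)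
  finally show ?thesis .
qed

lemma GM:
  fixes n :: int assumes n: "0 < n"
    and a1: "a1 \<in> gr_elems (cyc (2 * n))" and a2: "a2 \<in> gr_elems (cyc (2 * n))"
    and b1: "b1 \<in> gr_elems (cyc (2 * n))" and b2: "b2 \<in> gr_elems (cyc (2 * n))"
  shows "gr_mul (quat n) (pr a1 a2) (pr b1 b2) =
    pr (gr_add (gr_mul (cyc (2 * n)) a1 b1) (gr_mul (cyc (2 * n)) (cx (2 * n) n) (gr_mul (cyc (2 * n)) a2 (cbar n b2))))
       (gr_add (gr_mul (cyc (2 * n)) a1 b2) (gr_mul (cyc (2 * n)) a2 (cbar n b1)))"
proof (rule ext, clarify)
  fix z j
  have m: "0 < 2 * n" using n by simp
  have fin: "finite (carrier (quat n))" by (simp add: quat_carrier2)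
  show "gr_mul (quat n) (pr a1 a2) (pr b1 b2) (z, j) = pr (gr_add (gr_mul (cyc (2 * n)) a1 b1) (gr_mul (cyc (2 * n)) (cx (2 * n) n) (gr_mul (cyc (2 * n)) a2 (cbar n b2))))
       (gr_add (gr_mul (cyc (2 * n)) a1 b2) (gr_mul (cyc (2 * n)) a2 (cbar n b1))) (z, j)"
  proof (cases "(z, j) \<in> carrier (quat n)")
    case False
    then show ?thesis using n m by (auto simp: quat_out quat_carrier pr_def gr_add_def mulf)
  next
    case True
    then have z: "0 \<le> z" "z < 2 * n" and j: "j = 0 \<or> j = 1" by (auto simp: quat_carrier)
    show ?thesis
    proof (cases "j = 0")
      case True
      have "gr_mul (quat n) (pr a1 a2) (pr b1 b2) (z, j) =
        (\<Sum>i\<in>{0..<2*n}. (\<Sum>k\<in>{0..<2*n}. if (i + k) mod (2 * n) = z then a1 i * b1 k else 0)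
           + (\<Sum>k\<in>{0..<2*n}. if (i - k + n) mod (2 * n) = z then a2 i * b2 k else 0))"
        using True by (simp add: gr_mul_ind[OF fin] sumG quat_mult cong: if_cong)
      also have "\<dots> = (\<Sum>i\<in>{0..<2*n}. a1 i * b1 ((z - i) mod (2 * n)) + a2 i * b2 ((i + n - z) mod (2 * n)))"
        using z m by (simp add: collapse_add collapse_sub2)
      also have "\<dots> = pr (gr_add (gr_mul (cyc (2 * n)) a1 b1) (gr_mul (cyc (2 * n)) (cx (2 * n) n) (gr_mul (cyc (2 * n)) a2 (cbar n b2))))
       (gr_add (gr_mul (cyc (2 * n)) a1 b2) (gr_mul (cyc (2 * n)) a2 (cbar n b1))) (z, j)"
      proof -
        have zz: "0 \<le> (z - n) mod (2 * n)" "(z - n) mod (2 * n) < 2 * n" using m by auto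
        have "(\<Sum>i\<in>{0..<2*n}. a2 i * b2 ((i - (z - n) mod (2 * n)) mod (2 * n))) = (\<Sum>i\<in>{0..<2*n}. a2 i * b2 ((i + n - z) mod (2 * n)))"
          by (intro sum.cong) (auto simp: mod_simps algebra_simps)
        then have e2: "gr_mul (cyc (2 * n)) (cx (2 * n) n) (gr_mul (cyc (2 * n)) a2 (cbar n b2)) z
            = (\<Sum>i\<in>{0..<2*n}. a2 i * b2 ((i + n - z) mod (2 * n)))"
          using RX[OF n z] Rbar[OF n zz] by simp
        have e1: "gr_mul (cyc (2 * n)) a1 b1 z = (\<Sum>i\<in>{0..<2*n}. a1 i * b1 ((z - i) mod (2 * n)))"
          using z m by (simp add: mulf)
        show ?thesis using True by (simp add: pr_def gr_add_def e1 e2 sum.distrib)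
      qed
      finally show ?thesis .
    next
      case False
      then have j1: "j = 1" using j by simp
      have "gr_mul (quat n) (pr a1 a2) (pr b1 b2) (z, j) =
        (\<Sum>i\<in>{0..<2*n}. (\<Sum>k\<in>{0..<2*n}. if (i + k) mod (2 * n) = z then a1 i * b2 k else 0)
           + (\<Sum>k\<in>{0..<2*n}. if (i - k) mod (2 * n) = z then a2 i * b1 k else 0))"
        using j1 by (simp add: gr_mul_ind[OF fin] sumG quat_mult cong: if_cong)
      also have "\<dots> = (\<Sum>i\<in>{0..<2*n}. a1 i * b2 ((z - i) mod (2 * n)) + a2 i * b1 ((i - z) mod (2 * n)))"
        using z m by (simp add: collapse_add collapse_sub)
      also have "\<dots> = pr (gr_add (gr_mul (cyc (2 * n)) a1 b1) (gr_mul (cyc (2 * n)) (cx (2 * n) n) (gr_mul (cyc (2 * n)) a2 (cbar n b2))))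
       (gr_add (gr_mul (cyc (2 * n)) a1 b2) (gr_mul (cyc (2 * n)) a2 (cbar n b1))) (z, j)"
      proof -
        have e1: "gr_mul (cyc (2 * n)) a1 b2 z = (\<Sum>i\<in>{0..<2*n}. a1 i * b2 ((z - i) mod (2 * n)))"
          using z m by (simp add: mulf)
        show ?thesis using j1 by (simp add: pr_def gr_add_def e1 Rbar[OF n z] sum.distrib)
      qed
      finally show ?thesis .
    qed
  qed
qed


locale qctx = fixes n :: int assumes n_pos: "0 < n"

sublocale qctx \<subseteq> R: cring "Rg (2 * n)"
  using n_pos by (intro cring_Rg) simp

sublocale qctx \<subseteq> Rn: cring "Rg n"
  using n_pos by (intro cring_Rg) simp

context qctx begin

lemmas R_extra [algebra add: cring "zero (Rg (2 * n))" "add (Rg (2 * n))" "a_inv (Rg (2 * n))"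
   "a_minus (Rg (2 * n))" "one (Rg (2 * n))" "mult (Rg (2 * n))"] = R.r_one

lemmas Rn_extra [algebra add: cring "zero (Rg n)" "add (Rg n)" "a_inv (Rg n)"
   "a_minus (Rg n)" "one (Rg n)" "mult (Rg n)"] = Rn.r_one

abbreviation R where "R \<equiv> Rg (2 * n)"
abbreviation Rn where "Rn \<equiv> Rg n"

lemma m_pos: "0 < 2 * n" using n_pos by simp

lemma cx_in[simp]: "cx (2 * n) k \<in> carrier R"
  using m_pos by (auto simp: Rg_simps gr_elems_cyc cx_def gr_of_def)

lemma bar_in[simp]: "cbar n f \<in> carrier R"
  using n_pos by (simp add: Rg_simps cbar_closed)

lemma lam_in: "lambdaR n ns ms \<in> carrier R"
  using m_pos by (auto simp: Rg_simps gr_elems_cyc lambdaR_def Let_def mulf)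

lemma q_in: "qmap n f \<in> carrier Rn"
  using n_pos by (simp add: Rg_simps qmap_closed)

lemma lift_in: "lift n f \<in> carrier R"
  using n_pos by (simp add: Rg_simps lift_closed)

lemma bar_one: "cbar n \<one>\<^bsub>R\<^esub> = \<one>\<^bsub>R\<^esub>"
  using cbar_cx[OF n_pos, of 0] by (simp add: Rg_simps gr_one_cx)

lemma bar_zero: "cbar n \<zero>\<^bsub>R\<^esub> = \<zero>\<^bsub>R\<^esub>"
  by (simp add: Rg_simps cbar_zero)

lemma bar_X: "cbar n (cx (2 * n) 1) = cx (2 * n) (-1)"
  using cbar_cx[OF n_pos, of 1] by simp

lemma bar_add: "cbar n (a \<oplus>\<^bsub>R\<^esub> b) = cbar n a \<oplus>\<^bsub>R\<^esub> cbar n b"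
  by (simp add: Rg_simps cbar_def gr_map_def gr_add_def sum.distrib)

lemma bar_neg: "a \<in> carrier R \<Longrightarrow> cbar n (\<ominus>\<^bsub>R\<^esub> a) = \<ominus>\<^bsub>R\<^esub> cbar n a"
  using m_pos bar_in[of a] by (simp add: Rg_neg Rg_simps cbar_neg)

lemma bar_sub: "a \<in> carrier R \<Longrightarrow> b \<in> carrier R \<Longrightarrow> cbar n (a \<ominus>\<^bsub>R\<^esub> b) = cbar n a \<ominus>\<^bsub>R\<^esub> cbar n b"
  by (simp add: a_minus_def bar_add bar_neg)

lemma XY: "cx (2 * n) 1 \<otimes>\<^bsub>R\<^esub> cx (2 * n) (-1) = \<one>\<^bsub>R\<^esub>"
  using cx_cx[OF m_pos, of 1 "-1"] by (simp add: Rg_simps gr_one_cx)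

lemma q_mul: "qmap n (a \<otimes>\<^bsub>R\<^esub> b) = qmap n a \<otimes>\<^bsub>Rn\<^esub> qmap n b"
  using qmap_mul[OF n_pos] by (simp add: Rg_simps)

lemma q_add: "qmap n (a \<oplus>\<^bsub>R\<^esub> b) = qmap n a \<oplus>\<^bsub>Rn\<^esub> qmap n b"
  by (simp add: Rg_simps qmap_add)

lemma q_neg: "a \<in> carrier R \<Longrightarrow> qmap n (\<ominus>\<^bsub>R\<^esub> a) = \<ominus>\<^bsub>Rn\<^esub> qmap n a"
  using m_pos n_pos q_in[of a] by (simp add: Rg_neg Rg_simps qmap_neg)

lemma q_sub: "a \<in> carrier R \<Longrightarrow> b \<in> carrier R \<Longrightarrow> qmap n (a \<ominus>\<^bsub>R\<^esub> b) = qmap n a \<ominus>\<^bsub>Rn\<^esub> qmap n b"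
  by (simp add: a_minus_def q_add q_neg)

lemma q_one: "qmap n \<one>\<^bsub>R\<^esub> = \<one>\<^bsub>Rn\<^esub>"
  using qmap_one[OF n_pos] by (simp add: Rg_simps)

lemma q_Xn: "qmap n (cx (2 * n) n) = \<one>\<^bsub>Rn\<^esub>"
  using qmap_Xn[OF n_pos] by (simp add: Rg_simps)

lemma pr_add: "gr_add (pr a b) (pr c d) = pr (a \<oplus>\<^bsub>R\<^esub> c) (b \<oplus>\<^bsub>R\<^esub> d)"
  by (rule ext) (auto simp: Rg_simps gr_add_def pr_def)

lemma pr_sub: "a \<in> carrier R \<Longrightarrow> b \<in> carrier R \<Longrightarrow> c \<in> carrier R \<Longrightarrow> d \<in> carrier R \<Longrightarrow>
    gr_sub (pr a b) (pr c d) = pr (a \<ominus>\<^bsub>R\<^esub> c) (b \<ominus>\<^bsub>R\<^esub> d)"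
  using m_pos by (intro ext) (auto simp: Rg_simps Rg_sub gr_sub_def pr_def)

lemma pr_neg: "a \<in> carrier R \<Longrightarrow> b \<in> carrier R \<Longrightarrow> gr_neg (pr a b) = pr (\<ominus>\<^bsub>R\<^esub> a) (\<ominus>\<^bsub>R\<^esub> b)"
  using m_pos by (intro ext) (auto simp: Rg_simps Rg_neg gr_neg_def pr_def)

lemma pr_eq: "pr a b = pr c d \<Longrightarrow> a = c \<and> b = d"
proof -
  assume h: "pr a b = pr c d"
  have "a i = c i \<and> b i = d i" for i
    using fun_cong[OF h, of "(i, 0)"] fun_cong[OF h, of "(i, 1)"] by simp
  then show ?thesis by auto
qed

lemma pr_closed: "a \<in> carrier R \<Longrightarrow> b \<in> carrier R \<Longrightarrow> pr a b \<in> gr_elems (quat n)"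
  by (auto simp: Rg_simps gr_elems_cyc gr_elems_def quat_carrier pr_def)

lemma pr_decomp:
  assumes "f \<in> gr_elems (quat n)"
  shows "f = pr (\<lambda>i. f (i, 0)) (\<lambda>i. f (i, 1)) \<and> (\<lambda>i. f (i, 0)) \<in> carrier R \<and> (\<lambda>i. f (i, 1)) \<in> carrier R"
  using assms by (auto simp: Rg_simps gr_elems_cyc gr_elems_def quat_carrier pr_def)

lemma one_G: "gr_one (quat n) = pr \<one>\<^bsub>R\<^esub> \<zero>\<^bsub>R\<^esub>"
  by (rule ext) (auto simp: Rg_simps gr_one_def quat_def pr_def gr_of_def split: if_splits)

lemma qx_pr: "gr_of qx = pr (cx (2 * n) 1) \<zero>\<^bsub>R\<^esub>"
  using m_pos by (intro ext) (auto simp: Rg_simps qx_def pr_def gr_of_def cx_def split: if_splits)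

lemma qy_pr: "gr_of qy = pr \<zero>\<^bsub>R\<^esub> \<one>\<^bsub>R\<^esub>"
  by (rule ext) (auto simp: Rg_simps qy_def pr_def gr_of_def gr_one_def split: if_splits)

lemma incl_pr: "a \<in> carrier R \<Longrightarrow> incl n a = pr a \<zero>\<^bsub>R\<^esub>"
proof (rule ext, clarify)
  fix i j assume a: "a \<in> carrier R"
  have "{u \<in> carrier (cyc (2 * n)). (u, 0::int) = (i, j)} = (if j = 0 \<and> 0 \<le> i \<and> i < 2 * n then {i} else {})"
    by auto
  then show "incl n a (i, j) = pr a \<zero>\<^bsub>R\<^esub> (i, j)"
    using a by (auto simp: incl_def gr_map_def Rg_simps pr_def gr_elems_cyc)
qed

lemma GMR:
  assumes "a1 \<in> carrier R" "a2 \<in> carrier R" "b1 \<in> carrier R" "b2 \<in> carrier R"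
  shows "gr_mul (quat n) (pr a1 a2) (pr b1 b2) =
    pr (a1 \<otimes>\<^bsub>R\<^esub> b1 \<oplus>\<^bsub>R\<^esub> cx (2 * n) n \<otimes>\<^bsub>R\<^esub> (a2 \<otimes>\<^bsub>R\<^esub> cbar n b2))
       (a1 \<otimes>\<^bsub>R\<^esub> b2 \<oplus>\<^bsub>R\<^esub> a2 \<otimes>\<^bsub>R\<^esub> cbar n b1)"
  using GM[OF n_pos] assms by (simp add: Rg_simps)

lemma xy_pr: "gr_mul (quat n) (gr_of qx) (gr_of qy) = pr \<zero>\<^bsub>R\<^esub> (cx (2 * n) 1)"
proof -
  have "gr_mul (quat n) (gr_of qx) (gr_of qy) =
    pr (cx (2 * n) 1 \<otimes>\<^bsub>R\<^esub> \<zero>\<^bsub>R\<^esub> \<oplus>\<^bsub>R\<^esub> cx (2 * n) n \<otimes>\<^bsub>R\<^esub> (\<zero>\<^bsub>R\<^esub> \<otimes>\<^bsub>R\<^esub> \<one>\<^bsub>R\<^esub>))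
       (cx (2 * n) 1 \<otimes>\<^bsub>R\<^esub> \<one>\<^bsub>R\<^esub> \<oplus>\<^bsub>R\<^esub> \<zero>\<^bsub>R\<^esub> \<otimes>\<^bsub>R\<^esub> \<zero>\<^bsub>R\<^esub>)"
    unfolding qx_pr qy_pr using cx_in by (simp add: GMR bar_one bar_zero)
  also have "\<dots> = pr \<zero>\<^bsub>R\<^esub> (cx (2 * n) 1)"
    using cx_in[of 1] cx_in[of n] by simp
  finally show ?thesis .
qed

lemma incl_xy: "a \<in> carrier R \<Longrightarrow>
   gr_mul (quat n) (incl n a) (gr_mul (quat n) (gr_of qx) (gr_of qy)) = pr \<zero>\<^bsub>R\<^esub> (a \<otimes>\<^bsub>R\<^esub> cx (2 * n) 1)"
  by (simp add: incl_pr xy_pr GMR bar_zero bar_X)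

lemma master:
  assumes a1: "a1 \<in> carrier R" and a2: "a2 \<in> carrier R" and b1: "b1 \<in> carrier R" and b2: "b2 \<in> carrier R"
    and l: "l \<in> carrier R"
  shows "gr_add (gr_mul (quat n) (pr a1 a2) (gr_sub (gr_mul (quat n) (gr_of qx) (gr_of qy)) (gr_one (quat n))))
                (gr_mul (quat n) (pr b1 b2) (incl n l))
       = pr (\<ominus>\<^bsub>R\<^esub> a1 \<oplus>\<^bsub>R\<^esub> cx (2 * n) n \<otimes>\<^bsub>R\<^esub> a2 \<otimes>\<^bsub>R\<^esub> cx (2 * n) (-1) \<oplus>\<^bsub>R\<^esub> b1 \<otimes>\<^bsub>R\<^esub> l)
            (a1 \<otimes>\<^bsub>R\<^esub> cx (2 * n) 1 \<ominus>\<^bsub>R\<^esub> a2 \<oplus>\<^bsub>R\<^esub> b2 \<otimes>\<^bsub>R\<^esub> cbar n l)"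
proof -
  note X = cx_in[of 1] cx_in[of n] cx_in[of "-1"]
  have s: "gr_sub (gr_mul (quat n) (gr_of qx) (gr_of qy)) (gr_one (quat n)) = pr (\<ominus>\<^bsub>R\<^esub> \<one>\<^bsub>R\<^esub>) (cx (2 * n) 1)"
    unfolding xy_pr one_G using X by (simp add: pr_sub R.minus_eq)
  show ?thesis
    unfolding s incl_pr[OF l]
    using assms X bar_in[of l]
    apply (simp add: GMR pr_add bar_neg bar_one bar_X bar_zero)
    apply (rule arg_cong2[where f=pr])
    apply (insert assms X bar_in[of l])
    apply algebra
    apply algebra
    done
qed


lemma gr_add_closed: "f \<in> gr_elems G \<Longrightarrow> g \<in> gr_elems G \<Longrightarrow> gr_add f g \<in> gr_elems G"
  by (simp add: gr_elems_def gr_add_def)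

lemma gr_sub_closed: "f \<in> gr_elems G \<Longrightarrow> g \<in> gr_elems G \<Longrightarrow> gr_sub f g \<in> gr_elems G"
  by (simp add: gr_elems_def gr_sub_def)

lemma gmulG_closed: "gr_mul (quat n) f g \<in> gr_elems (quat n)"
  using n_pos by (auto simp: gr_elems_def quat_out)

lemma incl_closed: "a \<in> carrier R \<Longrightarrow> incl n a \<in> gr_elems (quat n)"
  by (simp add: incl_pr pr_closed)

lemma mulR: "gr_mul (cyc (2 * n)) a b = a \<otimes>\<^bsub>R\<^esub> b" by (simp add: Rg_simps)
lemma mulRn: "gr_mul (cyc n) a b = a \<otimes>\<^bsub>Rn\<^esub> b" by (simp add: Rg_simps)
lemma oneR: "gr_one (cyc (2 * n)) = \<one>\<^bsub>R\<^esub>" by (simp add: Rg_simps)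
lemma oneRn: "gr_one (cyc n) = \<one>\<^bsub>Rn\<^esub>" by (simp add: Rg_simps)
lemma addR: "gr_add a b = a \<oplus>\<^bsub>R\<^esub> b" by (simp add: Rg_simps)
lemma addRn: "gr_add a b = a \<oplus>\<^bsub>Rn\<^esub> b" by (simp add: Rg_simps)
lemma carrR: "carrier R = gr_elems (cyc (2 * n))" by (simp add: Rg_simps)
lemma carrRn: "carrier Rn = gr_elems (cyc n)" by (simp add: Rg_simps)

lemma part3:
  assumes l: "l \<in> carrier R" and d: "d \<in> carrier R" and g: "g \<in> carrier R"
    and h: "gr_add (gr_mul (cyc (2 * n)) d l) (gr_mul (cyc (2 * n)) g (cbar n l)) = gr_one (cyc (2 * n))"
  shows "(let \<alpha> = gr_neg (incl n (gr_mul (cyc (2 * n)) g (cbar n l)));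
            \<beta> = gr_add (incl n d) (gr_mul (quat n) (incl n g) (gr_mul (quat n) (gr_of qx) (gr_of qy)))
        in gr_add (gr_mul (quat n) \<alpha> (gr_sub (gr_mul (quat n) (gr_of qx) (gr_of qy)) (gr_one (quat n))))
                  (gr_mul (quat n) \<beta> (incl n l)) = gr_one (quat n))"
proof -
  have hR: "d \<otimes>\<^bsub>R\<^esub> l \<oplus>\<^bsub>R\<^esub> g \<otimes>\<^bsub>R\<^esub> cbar n l = \<one>\<^bsub>R\<^esub>"
    using h by (simp add: mulR oneR addR[symmetric])
  have a: "gr_neg (incl n (gr_mul (cyc (2 * n)) g (cbar n l))) =
      pr (\<ominus>\<^bsub>R\<^esub> (g \<otimes>\<^bsub>R\<^esub> cbar n l)) (\<ominus>\<^bsub>R\<^esub> \<zero>\<^bsub>R\<^esub>)"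
    using g by (simp add: mulR incl_pr pr_neg)
  have b: "gr_add (incl n d) (gr_mul (quat n) (incl n g) (gr_mul (quat n) (gr_of qx) (gr_of qy))) =
      pr (d \<oplus>\<^bsub>R\<^esub> \<zero>\<^bsub>R\<^esub>) (\<zero>\<^bsub>R\<^esub> \<oplus>\<^bsub>R\<^esub> g \<otimes>\<^bsub>R\<^esub> cx (2 * n) 1)"
    using g d by (simp only: incl_xy[OF g] incl_pr[OF d] pr_add)
  have c: "\<ominus>\<^bsub>R\<^esub> (g \<otimes>\<^bsub>R\<^esub> cbar n l) \<in> carrier R" "\<ominus>\<^bsub>R\<^esub> \<zero>\<^bsub>R\<^esub> \<in> carrier R"
    "d \<oplus>\<^bsub>R\<^esub> \<zero>\<^bsub>R\<^esub> \<in> carrier R" "\<zero>\<^bsub>R\<^esub> \<oplus>\<^bsub>R\<^esub> g \<otimes>\<^bsub>R\<^esub> cx (2 * n) 1 \<in> carrier R"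
    using l d g by simp_all
  show ?thesis
    unfolding Let_def a b
    apply (subst master[OF c l])
    apply (unfold one_G)
    apply (rule arg_cong2[where f=pr])
    apply (insert l d g cx_in[of 1] cx_in[of n] cx_in[of "-1"] bar_in[of l])
     apply (rule trans[OF _ hR])
     apply algebra
    apply algebra
    done
qed


end
context qctx begin
lemma part2:
  assumes l: "l \<in> carrier R" and d: "d \<in> carrier Rn" and g: "g \<in> carrier Rn"
    and h: "gr_add (gr_mul (cyc n) d (qmap n l)) (gr_mul (cyc n) g (qmap n (cbar n l))) = gr_one (cyc n)"
    and d': "d' \<in> carrier R" and g': "g' \<in> carrier R" and qd: "qmap n d' = d" and qg: "qmap n g' = g"
  shows "\<exists>\<epsilon> \<in> gr_elems (cyc (2 * n)).
            gr_add (gr_add (gr_mul (cyc (2 * n)) d' l) (gr_mul (cyc (2 * n)) g' (cbar n l)))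
                   (gr_mul (cyc (2 * n)) \<epsilon> (gr_sub (cx (2 * n) n) (gr_one (cyc (2 * n))))) = gr_one (cyc (2 * n))
          \<and> (let \<alpha> = gr_add (gr_sub (incl n \<epsilon>) (incl n (gr_mul (cyc (2 * n)) g' (cbar n l))))
                          (gr_mul (quat n) (incl n \<epsilon>) (gr_mul (quat n) (gr_of qx) (gr_of qy)));
                 \<beta> = gr_add (incl n d') (gr_mul (quat n) (incl n g') (gr_mul (quat n) (gr_of qx) (gr_of qy)))
             in gr_add (gr_mul (quat n) \<alpha> (gr_sub (gr_mul (quat n) (gr_of qx) (gr_of qy)) (gr_one (quat n))))
                       (gr_mul (quat n) \<beta> (incl n l))
                = gr_one (quat n))"
proof -
  let ?lb = "cbar n l"
  let ?X = "cx (2 * n) 1" and ?Y = "cx (2 * n) (-1)" and ?Xn = "cx (2 * n) n"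
  have hn: "d \<otimes>\<^bsub>Rn\<^esub> qmap n l \<oplus>\<^bsub>Rn\<^esub> g \<otimes>\<^bsub>Rn\<^esub> qmap n ?lb = \<one>\<^bsub>Rn\<^esub>"
    using h by (simp add: mulRn oneRn addRn[symmetric])
  define hh where "hh = d' \<otimes>\<^bsub>R\<^esub> l \<oplus>\<^bsub>R\<^esub> g' \<otimes>\<^bsub>R\<^esub> ?lb \<ominus>\<^bsub>R\<^esub> \<one>\<^bsub>R\<^esub>"
  have hh_in: "hh \<in> carrier R" using l d' g' by (simp add: hh_def)
  have qh: "qmap n hh = \<zero>\<^bsub>Rn\<^esub>"
    using l d' g' q_in[of l] q_in[of ?lb] q_in[of d'] q_in[of g']
    by (simp add: hh_def q_sub q_add q_mul q_one qd qg hn Rn.minus_eq Rn.r_neg)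
  define e where "e = lift n hh"
  have e_in: "e \<in> carrier R" by (simp add: e_def lift_in)
  have K: "e \<otimes>\<^bsub>R\<^esub> (\<one>\<^bsub>R\<^esub> \<ominus>\<^bsub>R\<^esub> ?Xn) = hh"
    using kernel[OF n_pos, of hh] hh_in qh m_pos
    by (simp add: e_def Rg_simps Rg_sub gr_one_cx cx_in[unfolded Rg_simps])
  have eqR: "(d' \<otimes>\<^bsub>R\<^esub> l \<oplus>\<^bsub>R\<^esub> g' \<otimes>\<^bsub>R\<^esub> ?lb) \<oplus>\<^bsub>R\<^esub> e \<otimes>\<^bsub>R\<^esub> (?Xn \<ominus>\<^bsub>R\<^esub> \<one>\<^bsub>R\<^esub>) = \<one>\<^bsub>R\<^esub>"
  proof -
    have "(d' \<otimes>\<^bsub>R\<^esub> l \<oplus>\<^bsub>R\<^esub> g' \<otimes>\<^bsub>R\<^esub> ?lb) \<oplus>\<^bsub>R\<^esub> e \<otimes>\<^bsub>R\<^esub> (?Xn \<ominus>\<^bsub>R\<^esub> \<one>\<^bsub>R\<^esub>)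
       = (d' \<otimes>\<^bsub>R\<^esub> l \<oplus>\<^bsub>R\<^esub> g' \<otimes>\<^bsub>R\<^esub> ?lb) \<ominus>\<^bsub>R\<^esub> e \<otimes>\<^bsub>R\<^esub> (\<one>\<^bsub>R\<^esub> \<ominus>\<^bsub>R\<^esub> ?Xn)"
      using l d' g' e_in cx_in[of n] bar_in[of l] by algebra
    also have "\<dots> = \<one>\<^bsub>R\<^esub>"
      unfolding K hh_def using l d' g' e_in cx_in[of n] bar_in[of l] by algebra
    finally show ?thesis .
  qed
  have eq1: "gr_add (gr_add (gr_mul (cyc (2 * n)) d' l) (gr_mul (cyc (2 * n)) g' (cbar n l)))
                   (gr_mul (cyc (2 * n)) e (gr_sub (cx (2 * n) n) (gr_one (cyc (2 * n))))) = gr_one (cyc (2 * n))"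
  proof -
    have s: "gr_sub (cx (2*n) n) (gr_one (cyc (2*n))) = cx (2*n) n \<ominus>\<^bsub>R\<^esub> \<one>\<^bsub>R\<^esub>"
      using Rg_sub[OF m_pos, of "cx (2*n) n" "\<one>\<^bsub>R\<^esub>"] cx_in[of n] R.one_closed by (simp add: Rg_simps)
    show ?thesis unfolding s using eqR by (simp add: mulR addR oneR)
  qed
  have gl: "g' \<otimes>\<^bsub>R\<^esub> ?lb \<in> carrier R" using g' by simp
  have a: "gr_add (gr_sub (incl n e) (incl n (gr_mul (cyc (2 * n)) g' (cbar n l))))
                          (gr_mul (quat n) (incl n e) (gr_mul (quat n) (gr_of qx) (gr_of qy)))
         = pr ((e \<ominus>\<^bsub>R\<^esub> g' \<otimes>\<^bsub>R\<^esub> ?lb) \<oplus>\<^bsub>R\<^esub> \<zero>\<^bsub>R\<^esub>) ((\<zero>\<^bsub>R\<^esub> \<ominus>\<^bsub>R\<^esub> \<zero>\<^bsub>R\<^esub>) \<oplus>\<^bsub>R\<^esub> e \<otimes>\<^bsub>R\<^esub> ?X)"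
    using e_in g' gl
    by (simp only: incl_xy[OF e_in])
       (simp only: mulR incl_pr[OF e_in] incl_pr[OF gl] pr_sub[OF e_in R.zero_closed gl R.zero_closed] pr_add)
  have b: "gr_add (incl n d') (gr_mul (quat n) (incl n g') (gr_mul (quat n) (gr_of qx) (gr_of qy))) =
      pr (d' \<oplus>\<^bsub>R\<^esub> \<zero>\<^bsub>R\<^esub>) (\<zero>\<^bsub>R\<^esub> \<oplus>\<^bsub>R\<^esub> g' \<otimes>\<^bsub>R\<^esub> ?X)"
    using g' d' by (simp only: incl_xy[OF g'] incl_pr[OF d'] pr_add)
  define T where "T = (d' \<otimes>\<^bsub>R\<^esub> l \<oplus>\<^bsub>R\<^esub> g' \<otimes>\<^bsub>R\<^esub> ?lb) \<oplus>\<^bsub>R\<^esub> e \<otimes>\<^bsub>R\<^esub> (?Xn \<ominus>\<^bsub>R\<^esub> \<one>\<^bsub>R\<^esub>)"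
  have XY0: "?X \<otimes>\<^bsub>R\<^esub> ?Y \<ominus>\<^bsub>R\<^esub> \<one>\<^bsub>R\<^esub> = \<zero>\<^bsub>R\<^esub>" by (simp add: XY R.minus_eq R.r_neg)
  have c: "(e \<ominus>\<^bsub>R\<^esub> g' \<otimes>\<^bsub>R\<^esub> ?lb) \<oplus>\<^bsub>R\<^esub> \<zero>\<^bsub>R\<^esub> \<in> carrier R"
    "(\<zero>\<^bsub>R\<^esub> \<ominus>\<^bsub>R\<^esub> \<zero>\<^bsub>R\<^esub>) \<oplus>\<^bsub>R\<^esub> e \<otimes>\<^bsub>R\<^esub> ?X \<in> carrier R"
    "d' \<oplus>\<^bsub>R\<^esub> \<zero>\<^bsub>R\<^esub> \<in> carrier R" "\<zero>\<^bsub>R\<^esub> \<oplus>\<^bsub>R\<^esub> g' \<otimes>\<^bsub>R\<^esub> ?X \<in> carrier R"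
    using e_in d' g' by simp_all
  have main: "gr_add (gr_mul (quat n) (pr ((e \<ominus>\<^bsub>R\<^esub> g' \<otimes>\<^bsub>R\<^esub> ?lb) \<oplus>\<^bsub>R\<^esub> \<zero>\<^bsub>R\<^esub>) ((\<zero>\<^bsub>R\<^esub> \<ominus>\<^bsub>R\<^esub> \<zero>\<^bsub>R\<^esub>) \<oplus>\<^bsub>R\<^esub> e \<otimes>\<^bsub>R\<^esub> ?X))
         (gr_sub (gr_mul (quat n) (gr_of qx) (gr_of qy)) (gr_one (quat n))))
      (gr_mul (quat n) (pr (d' \<oplus>\<^bsub>R\<^esub> \<zero>\<^bsub>R\<^esub>) (\<zero>\<^bsub>R\<^esub> \<oplus>\<^bsub>R\<^esub> g' \<otimes>\<^bsub>R\<^esub> ?X)) (incl n l)) = gr_one (quat n)"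
    apply (subst master[OF c l])
    apply (unfold one_G)
    apply (rule arg_cong2[where f=pr])
    apply (insert l d' g' e_in cx_in[of 1] cx_in[of n] cx_in[of "-1"] bar_in[of l])
     apply (rule trans[OF _ eqR])
     apply (rule trans[of _ "T \<oplus>\<^bsub>R\<^esub> (?Xn \<otimes>\<^bsub>R\<^esub> e) \<otimes>\<^bsub>R\<^esub> (?X \<otimes>\<^bsub>R\<^esub> ?Y \<ominus>\<^bsub>R\<^esub> \<one>\<^bsub>R\<^esub>)"])
      apply (unfold T_def)
      apply algebra
     apply (simp only: XY0)
     apply (simp add: l d' g' e_in)
    apply algebra
    done
  show ?thesis
    by (rule bexI[of _ e]) (use eq1 main a b e_in in \<open>simp_all add: Let_def carrR\<close>)
qed


end
context qctx begin
lemma part1f: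
  assumes l: "l \<in> carrier R" and al: "al \<in> gr_elems (quat n)" and be: "be \<in> gr_elems (quat n)"
    and h: "gr_add (gr_mul (quat n) al (gr_sub (gr_mul (quat n) (gr_of qx) (gr_of qy)) (gr_one (quat n))))
                   (gr_mul (quat n) be (incl n l)) = gr_one (quat n)"
  shows "\<exists>d \<in> gr_elems (cyc n). \<exists>g \<in> gr_elems (cyc n).
        gr_add (gr_mul (cyc n) d (qmap n l)) (gr_mul (cyc n) g (qmap n (cbar n l))) = gr_one (cyc n)"
proof -
  let ?lb = "cbar n l"
  let ?X = "cx (2 * n) 1" and ?Y = "cx (2 * n) (-1)" and ?Xn = "cx (2 * n) n"
  define a1 where "a1 = (\<lambda>i. al (i, 0))"
  define a2 where "a2 = (\<lambda>i. al (i, 1))"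
  define b1 where "b1 = (\<lambda>i. be (i, 0))"
  define b2 where "b2 = (\<lambda>i. be (i, 1))"
  have A: "al = pr a1 a2" "a1 \<in> carrier R" "a2 \<in> carrier R"
    using pr_decomp[OF al] by (simp_all add: a1_def a2_def)
  have B: "be = pr b1 b2" "b1 \<in> carrier R" "b2 \<in> carrier R"
    using pr_decomp[OF be] by (simp_all add: b1_def b2_def)
  have "pr (\<ominus>\<^bsub>R\<^esub> a1 \<oplus>\<^bsub>R\<^esub> ?Xn \<otimes>\<^bsub>R\<^esub> a2 \<otimes>\<^bsub>R\<^esub> ?Y \<oplus>\<^bsub>R\<^esub> b1 \<otimes>\<^bsub>R\<^esub> l)
            (a1 \<otimes>\<^bsub>R\<^esub> ?X \<ominus>\<^bsub>R\<^esub> a2 \<oplus>\<^bsub>R\<^esub> b2 \<otimes>\<^bsub>R\<^esub> ?lb) = pr \<one>\<^bsub>R\<^esub> \<zero>\<^bsub>R\<^esub>"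
  proof -
    have eq: "gr_add (gr_mul (quat n) (pr a1 a2) (gr_sub (gr_mul (quat n) (gr_of qx) (gr_of qy)) (gr_one (quat n))))
                   (gr_mul (quat n) (pr b1 b2) (incl n l)) = gr_one (quat n)"
      using h A(1) B(1) by simp
    then have "pr (\<ominus>\<^bsub>R\<^esub> a1 \<oplus>\<^bsub>R\<^esub> ?Xn \<otimes>\<^bsub>R\<^esub> a2 \<otimes>\<^bsub>R\<^esub> ?Y \<oplus>\<^bsub>R\<^esub> b1 \<otimes>\<^bsub>R\<^esub> l)
            (a1 \<otimes>\<^bsub>R\<^esub> ?X \<ominus>\<^bsub>R\<^esub> a2 \<oplus>\<^bsub>R\<^esub> b2 \<otimes>\<^bsub>R\<^esub> ?lb) = gr_one (quat n)"
      by (simp only: master[OF A(2) A(3) B(2) B(3) l])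
    then show ?thesis by (simp only: one_G)
  qed
  then have E1: "\<ominus>\<^bsub>R\<^esub> a1 \<oplus>\<^bsub>R\<^esub> ?Xn \<otimes>\<^bsub>R\<^esub> a2 \<otimes>\<^bsub>R\<^esub> ?Y \<oplus>\<^bsub>R\<^esub> b1 \<otimes>\<^bsub>R\<^esub> l = \<one>\<^bsub>R\<^esub>"
    and E2: "a1 \<otimes>\<^bsub>R\<^esub> ?X \<ominus>\<^bsub>R\<^esub> a2 \<oplus>\<^bsub>R\<^esub> b2 \<otimes>\<^bsub>R\<^esub> ?lb = \<zero>\<^bsub>R\<^esub>"
    by (auto dest: pr_eq)
  define T where "T = b1 \<otimes>\<^bsub>R\<^esub> l \<oplus>\<^bsub>R\<^esub> (?Xn \<otimes>\<^bsub>R\<^esub> ?Y \<otimes>\<^bsub>R\<^esub> b2) \<otimes>\<^bsub>R\<^esub> ?lb \<oplus>\<^bsub>R\<^esub> a1 \<otimes>\<^bsub>R\<^esub> (?Xn \<ominus>\<^bsub>R\<^esub> \<one>\<^bsub>R\<^esub>)"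
  have "T = (\<ominus>\<^bsub>R\<^esub> a1 \<oplus>\<^bsub>R\<^esub> ?Xn \<otimes>\<^bsub>R\<^esub> a2 \<otimes>\<^bsub>R\<^esub> ?Y \<oplus>\<^bsub>R\<^esub> b1 \<otimes>\<^bsub>R\<^esub> l)
     \<oplus>\<^bsub>R\<^esub> (?Xn \<otimes>\<^bsub>R\<^esub> ?Y) \<otimes>\<^bsub>R\<^esub> (a1 \<otimes>\<^bsub>R\<^esub> ?X \<ominus>\<^bsub>R\<^esub> a2 \<oplus>\<^bsub>R\<^esub> b2 \<otimes>\<^bsub>R\<^esub> ?lb)
     \<oplus>\<^bsub>R\<^esub> (a1 \<otimes>\<^bsub>R\<^esub> ?Xn) \<otimes>\<^bsub>R\<^esub> (\<one>\<^bsub>R\<^esub> \<ominus>\<^bsub>R\<^esub> ?X \<otimes>\<^bsub>R\<^esub> ?Y)"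
    unfolding T_def using A B l cx_in[of 1] cx_in[of n] cx_in[of "-1"] bar_in[of l]
    by algebra
  also have "\<dots> = \<one>\<^bsub>R\<^esub>"
    unfolding E1 E2 XY using A B by (simp add: R.minus_eq R.r_neg)
  finally have T1: "T = \<one>\<^bsub>R\<^esub>" .
  have "qmap n T = \<one>\<^bsub>Rn\<^esub>" by (simp add: T1 q_one)
  moreover have "qmap n T = qmap n b1 \<otimes>\<^bsub>Rn\<^esub> qmap n l \<oplus>\<^bsub>Rn\<^esub> qmap n (?Xn \<otimes>\<^bsub>R\<^esub> ?Y \<otimes>\<^bsub>R\<^esub> b2) \<otimes>\<^bsub>Rn\<^esub> qmap n ?lb"
    unfolding T_def using A B l q_in[of a1] q_in[of b1] q_in[of l] q_in[of ?lb] q_in[of "?Xn \<otimes>\<^bsub>R\<^esub> ?Y \<otimes>\<^bsub>R\<^esub> b2"]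
    by (simp add: q_add q_mul q_sub q_Xn q_one Rn.minus_eq Rn.r_neg)
  ultimately have "qmap n b1 \<otimes>\<^bsub>Rn\<^esub> qmap n l \<oplus>\<^bsub>Rn\<^esub> qmap n (?Xn \<otimes>\<^bsub>R\<^esub> ?Y \<otimes>\<^bsub>R\<^esub> b2) \<otimes>\<^bsub>Rn\<^esub> qmap n ?lb = \<one>\<^bsub>Rn\<^esub>"
    by simp
  then show ?thesis
    using q_in[of b1] q_in[of "?Xn \<otimes>\<^bsub>R\<^esub> ?Y \<otimes>\<^bsub>R\<^esub> b2"]
    by (auto simp: mulRn oneRn addRn[symmetric] carrRn)
qed

end

theorem lemma3p20:
  fixes n :: int and ns ms :: "int list"
  assumes "n \<ge> 2"
    and "length ms = length ns"
    and "\<forall>a \<in> set ns. a \<noteq> 0"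
    and "\<forall>a \<in> set ms. a \<noteq> 0"
  defines "G \<equiv> quat n" and "C \<equiv> cyc (2 * n)" and "Cn \<equiv> cyc n"
    and "lam \<equiv> lambdaR n ns ms"
    and "xy \<equiv> gr_mul (quat n) (gr_of qx) (gr_of qy)"
  shows
   "((\<exists>\<alpha> \<in> gr_elems G. \<exists>\<beta> \<in> gr_elems G.
        gr_add (gr_mul G \<alpha> (gr_sub xy (gr_one G))) (gr_mul G \<beta> (incl n lam)) = gr_one G)
     \<longleftrightarrow>
     (\<exists>\<delta> \<in> gr_elems Cn. \<exists>\<gamma> \<in> gr_elems Cn.
        gr_add (gr_mul Cn \<delta> (qmap n lam)) (gr_mul Cn \<gamma> (qmap n (cbar n lam))) = gr_one Cn))
    \<and>
    (\<forall>\<delta> \<in> gr_elems Cn. \<forall>\<gamma> \<in> gr_elems Cn.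
       gr_add (gr_mul Cn \<delta> (qmap n lam)) (gr_mul Cn \<gamma> (qmap n (cbar n lam))) = gr_one Cn \<longrightarrow>
       (\<forall>\<delta>' \<in> gr_elems C. \<forall>\<gamma>' \<in> gr_elems C. qmap n \<delta>' = \<delta> \<and> qmap n \<gamma>' = \<gamma> \<longrightarrow>
         (\<exists>\<epsilon> \<in> gr_elems C.
            gr_add (gr_add (gr_mul C \<delta>' lam) (gr_mul C \<gamma>' (cbar n lam)))
                   (gr_mul C \<epsilon> (gr_sub (cx (2 * n) n) (gr_one C))) = gr_one C
          \<and> (let \<alpha> = gr_add (gr_sub (incl n \<epsilon>) (incl n (gr_mul C \<gamma>' (cbar n lam))))
                          (gr_mul G (incl n \<epsilon>) xy);
                 \<beta> = gr_add (incl n \<delta>') (gr_mul G (incl n \<gamma>') xy)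
             in gr_add (gr_mul G \<alpha> (gr_sub xy (gr_one G))) (gr_mul G \<beta> (incl n lam))
                = gr_one G))))
    \<and>
    (\<forall>\<delta> \<in> gr_elems C. \<forall>\<gamma> \<in> gr_elems C.
       gr_add (gr_mul C \<delta> lam) (gr_mul C \<gamma> (cbar n lam)) = gr_one C \<longrightarrow>
       (let \<alpha> = gr_neg (incl n (gr_mul C \<gamma> (cbar n lam)));
            \<beta> = gr_add (incl n \<delta>) (gr_mul G (incl n \<gamma>) xy)
        in gr_add (gr_mul G \<alpha> (gr_sub xy (gr_one G))) (gr_mul G \<beta> (incl n lam)) = gr_one G))"
proof -
  have n0: "0 < n" using assms(1) by simp
  interpret qctx n by (rule qctx.intro) (rule n0)
  have l: "lam \<in> carrier (Rg (2 * n))" unfolding lam_def by (rule lam_in)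
  have P2: "\<forall>\<delta> \<in> gr_elems Cn. \<forall>\<gamma> \<in> gr_elems Cn.
       gr_add (gr_mul Cn \<delta> (qmap n lam)) (gr_mul Cn \<gamma> (qmap n (cbar n lam))) = gr_one Cn \<longrightarrow>
       (\<forall>\<delta>' \<in> gr_elems C. \<forall>\<gamma>' \<in> gr_elems C. qmap n \<delta>' = \<delta> \<and> qmap n \<gamma>' = \<gamma> \<longrightarrow>
         (\<exists>\<epsilon> \<in> gr_elems C.
            gr_add (gr_add (gr_mul C \<delta>' lam) (gr_mul C \<gamma>' (cbar n lam)))
                   (gr_mul C \<epsilon> (gr_sub (cx (2 * n) n) (gr_one C))) = gr_one C
          \<and> (let \<alpha> = gr_add (gr_sub (incl n \<epsilon>) (incl n (gr_mul C \<gamma>' (cbar n lam))))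
                          (gr_mul G (incl n \<epsilon>) xy);
                 \<beta> = gr_add (incl n \<delta>') (gr_mul G (incl n \<gamma>') xy)
             in gr_add (gr_mul G \<alpha> (gr_sub xy (gr_one G))) (gr_mul G \<beta> (incl n lam))
                = gr_one G)))"
    unfolding G_def C_def Cn_def xy_def
    using part2[OF l] by (auto simp: carrR carrRn)
  have P3: "\<forall>\<delta> \<in> gr_elems C. \<forall>\<gamma> \<in> gr_elems C.
       gr_add (gr_mul C \<delta> lam) (gr_mul C \<gamma> (cbar n lam)) = gr_one C \<longrightarrow>
       (let \<alpha> = gr_neg (incl n (gr_mul C \<gamma> (cbar n lam)));
            \<beta> = gr_add (incl n \<delta>) (gr_mul G (incl n \<gamma>) xy)
        in gr_add (gr_mul G \<alpha> (gr_sub xy (gr_one G))) (gr_mul G \<beta> (incl n lam)) = gr_one G)"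
    unfolding G_def C_def xy_def
    using part3[OF l] by (auto simp: carrR)
  have P1f: "(\<exists>\<alpha> \<in> gr_elems G. \<exists>\<beta> \<in> gr_elems G.
        gr_add (gr_mul G \<alpha> (gr_sub xy (gr_one G))) (gr_mul G \<beta> (incl n lam)) = gr_one G)
     \<Longrightarrow> (\<exists>\<delta> \<in> gr_elems Cn. \<exists>\<gamma> \<in> gr_elems Cn.
        gr_add (gr_mul Cn \<delta> (qmap n lam)) (gr_mul Cn \<gamma> (qmap n (cbar n lam))) = gr_one Cn)"
    unfolding G_def Cn_def xy_def using part1f[OF l] by blast
  have P1b: "(\<exists>\<alpha> \<in> gr_elems G. \<exists>\<beta> \<in> gr_elems G.
        gr_add (gr_mul G \<alpha> (gr_sub xy (gr_one G))) (gr_mul G \<beta> (incl n lam)) = gr_one G)"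
    if ex: "\<exists>\<delta> \<in> gr_elems Cn. \<exists>\<gamma> \<in> gr_elems Cn.
        gr_add (gr_mul Cn \<delta> (qmap n lam)) (gr_mul Cn \<gamma> (qmap n (cbar n lam))) = gr_one Cn"
  proof -
    obtain d g where d: "d \<in> gr_elems Cn" and g: "g \<in> gr_elems Cn"
      and h: "gr_add (gr_mul Cn d (qmap n lam)) (gr_mul Cn g (qmap n (cbar n lam))) = gr_one Cn"
      using ex by blast
    have ld: "lift n d \<in> gr_elems C" "qmap n (lift n d) = d"
      using d n0 by (simp_all add: C_def Cn_def lift_closed qmap_lift)
    have lg: "lift n g \<in> gr_elems C" "qmap n (lift n g) = g"
      using g n0 by (simp_all add: C_def Cn_def lift_closed qmap_lift)
    obtain e where e: "e \<in> gr_elems C" and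
      eq: "(let \<alpha> = gr_add (gr_sub (incl n e) (incl n (gr_mul C (lift n g) (cbar n lam))))
                          (gr_mul G (incl n e) xy);
                 \<beta> = gr_add (incl n (lift n d)) (gr_mul G (incl n (lift n g)) xy)
             in gr_add (gr_mul G \<alpha> (gr_sub xy (gr_one G))) (gr_mul G \<beta> (incl n lam))
                = gr_one G)"
      using P2 d g h ld lg by blast
    have eR: "e \<in> carrier (Rg (2 * n))" using e by (simp add: C_def carrR)
    have gR: "gr_mul C (lift n g) (cbar n lam) \<in> carrier (Rg (2 * n))"
      using m_pos by (simp add: C_def carrR cmul_closed)
    have dR: "lift n d \<in> carrier (Rg (2 * n))" "lift n g \<in> carrier (Rg (2 * n))"
      using ld lg by (simp_all add: C_def carrR)
    show ?thesis
      using eq unfolding Let_def G_def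
      by (intro bexI[of _ "gr_add (gr_sub (incl n e) (incl n (gr_mul C (lift n g) (cbar n lam))))
                          (gr_mul (quat n) (incl n e) xy)"]
                bexI[of _ "gr_add (incl n (lift n d)) (gr_mul (quat n) (incl n (lift n g)) xy)"])
         (auto intro!: gr_add_closed gr_sub_closed incl_closed gmulG_closed eR gR dR)
  qed
  show ?thesis using P1f P1b P2 P3 by blast
qed

end
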